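(* Let $\sigma\in\Omega_L$ satisfy $N(\sigma)\le n_0(n_0+1)+1$, and let $\sigma^o$ be the configuration obtained from $\sigma$ by replacing every spin equal to $+1$ by $0$, i.e. $\sigma^o(x)=\min\{\sigma(x),0\}$. Then $\mathbb H(\sigma^o)\le\mathbb H(\sigma)$.
   Context: Fix $h\in(0,1)$ with $2/h\notin\mathbb Z$, $n_0=\lfloor 2/h\rfloor$. $\Lambda_L$ is the two-dimensional discrete torus of side $L$, with $L\ge n_0(n_0+1)+2$, and $\Omega_L=\{-1,0,1\}^{\Lambda_L}$. Hamiltonian $\mathbb H(\sigma)=\sum(\sigma(y)-\sigma(x))^2-h\sum_{x\in\Lambda_L}\sigma(x)$, the first sum over unordered nearest-neighbour pairs $\{x,y\}$. $N(\sigma)=\#\{x\in\Lambda_L:\sigma(x)\ne-1\}$. *)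

theory Defs
  imports Complex_Main
begin

definition torus :: "nat \<Rightarrow> (nat \<times> nat) set" where
  "torus L = {0..<L} \<times> {0..<L}"

definition Omega :: "nat \<Rightarrow> ((nat \<times> nat) \<Rightarrow> int) set" where
  "Omega L = {\<sigma>. \<forall>x\<in>torus L. \<sigma> x \<in> {-1, 0, 1}}"

definition nn_edges :: "nat \<Rightarrow> (nat \<times> nat) set set" where
  "nn_edges L = {{x, y} | x y. x \<in> torus L \<and> y \<in> torus L \<and>
      (y = ((fst x + 1) mod L, snd x) \<or> y = (fst x, (snd x + 1) mod L))}"

text \<open>Hamiltonian: sum over unordered nn pairs {x,y} of (sigma y - sigma x)^2 minus h times magnetisation.\<close>
definition H :: "nat \<Rightarrow> real \<Rightarrow> ((nat \<times> nat) \<Rightarrow> int) \<Rightarrow> real" where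
  "H L h \<sigma> = (\<Sum>e\<in>nn_edges L. (\<Sum>x\<in>e. \<Sum>y\<in>e. real_of_int ((\<sigma> y - \<sigma> x)^2)) / 2)
              - h * (\<Sum>x\<in>torus L. real_of_int (\<sigma> x))"

definition Ncount :: "nat \<Rightarrow> ((nat \<times> nat) \<Rightarrow> int) \<Rightarrow> nat" where
  "Ncount L \<sigma> = card {x \<in> torus L. \<sigma> x \<noteq> -1}"

end

theory Submission
  imports Defs
begin

definition Rt :: "nat \<Rightarrow> nat \<times> nat \<Rightarrow> nat \<times> nat" where
  "Rt L x = ((fst x + 1) mod L, snd x)"
definition Ut :: "nat \<Rightarrow> nat \<times> nat \<Rightarrow> nat \<times> nat" where
  "Ut L x = (fst x, (snd x + 1) mod L)"

lemma mod_step_ne: "(a::nat) < L \<Longrightarrow> 2 \<le> L \<Longrightarrow> (a + 1) mod L \<noteq> a"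
  by (cases "a + 1 < L") (auto simp: mod_if)

lemma mod_step2_ne: "(a::nat) < L \<Longrightarrow> 3 \<le> L \<Longrightarrow> ((a + 1) mod L + 1) mod L \<noteq> a"
proof (cases "a + 1 < L")
  case True
  assume "a < L" "3 \<le> L"
  then show ?thesis using True by (cases "a + 2 < L") (auto simp: mod_if)
next
  case False
  assume "a < L" "3 \<le> L"
  then have "a + 1 = L" using False by auto
  then show ?thesis using \<open>3 \<le> L\<close> by (auto simp: mod_if)
qed

lemma finite_torus: "finite (torus L)" unfolding torus_def by auto

lemma Rt_in: "x \<in> torus L \<Longrightarrow> Rt L x \<in> torus L"
  unfolding torus_def Rt_def by auto
lemma Ut_in: "x \<in> torus L \<Longrightarrow> Ut L x \<in> torus L"
  unfolding torus_def Ut_def by auto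

lemma edges_eq: "nn_edges L = (\<lambda>x. {x, Rt L x}) ` torus L \<union> (\<lambda>x. {x, Ut L x}) ` torus L"
proof
  show "nn_edges L \<subseteq> (\<lambda>x. {x, Rt L x}) ` torus L \<union> (\<lambda>x. {x, Ut L x}) ` torus L"
    unfolding nn_edges_def Rt_def Ut_def by auto
next
  have "{x, Rt L x} \<in> nn_edges L" if "x \<in> torus L" for x
    unfolding nn_edges_def using that Rt_in[OF that] unfolding Rt_def by blast
  moreover have "{x, Ut L x} \<in> nn_edges L" if "x \<in> torus L" for x
    unfolding nn_edges_def using that Ut_in[OF that] unfolding Ut_def by blast
  ultimately show "(\<lambda>x. {x, Rt L x}) ` torus L \<union> (\<lambda>x. {x, Ut L x}) ` torus L \<subseteq> nn_edges L"
    by blast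
qed

lemma Rt_ne: "x \<in> torus L \<Longrightarrow> 2 \<le> L \<Longrightarrow> Rt L x \<noteq> x"
  unfolding torus_def Rt_def using mod_step_ne by (cases x) (auto simp del: Suc_eq_plus1 simp: Suc_eq_plus1[symmetric])
lemma Ut_ne: "x \<in> torus L \<Longrightarrow> 2 \<le> L \<Longrightarrow> Ut L x \<noteq> x"
  unfolding torus_def Ut_def using mod_step_ne by (cases x) (auto simp del: Suc_eq_plus1 simp: Suc_eq_plus1[symmetric])

lemma inj_R: assumes "3 \<le> L" shows "inj_on (\<lambda>x. {x, Rt L x}) (torus L)"
proof (rule inj_onI)
  fix x y assume x: "x \<in> torus L" and y: "y \<in> torus L" and e: "{x, Rt L x} = {y, Rt L y}"
  show "x = y"
  proof (rule ccontr)
    assume "x \<noteq> y"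
    with e have "x = Rt L y" "Rt L x = y" by (auto simp: doubleton_eq_iff)
    then have "x = Rt L (Rt L x)" by simp
    then have "fst x = ((fst x + 1) mod L + 1) mod L" unfolding Rt_def by (metis fst_conv)
    moreover have "fst x < L" using x unfolding torus_def by auto
    ultimately show False using mod_step2_ne assms by metis
  qed
qed

lemma inj_U: assumes "3 \<le> L" shows "inj_on (\<lambda>x. {x, Ut L x}) (torus L)"
proof (rule inj_onI)
  fix x y assume x: "x \<in> torus L" and y: "y \<in> torus L" and e: "{x, Ut L x} = {y, Ut L y}"
  show "x = y"
  proof (rule ccontr)
    assume "x \<noteq> y"
    with e have "x = Ut L y" "Ut L x = y" by (auto simp: doubleton_eq_iff)
    then have "x = Ut L (Ut L x)" by simp
    then have "snd x = ((snd x + 1) mod L + 1) mod L" unfolding Ut_def by (metis snd_conv)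
    moreover have "snd x < L" using x unfolding torus_def by auto
    ultimately show False using mod_step2_ne assms by metis
  qed
qed

lemma disj_RU: assumes "3 \<le> L"
  shows "(\<lambda>x. {x, Rt L x}) ` torus L \<inter> (\<lambda>x. {x, Ut L x}) ` torus L = {}"
proof (rule ccontr)
  assume "\<not> ?thesis"
  then obtain x y where x: "x \<in> torus L" and y: "y \<in> torus L" and e: "{x, Rt L x} = {y, Ut L y}"
    by blast
  have fx: "fst x < L" "snd x < L" using x unfolding torus_def by auto
  have fy: "fst y < L" "snd y < L" using y unfolding torus_def by auto
  from e have "(x = y \<and> Rt L x = Ut L y) \<or> (x = Ut L y \<and> Rt L x = y)" by (auto simp: doubleton_eq_iff)
  then show False
  proof
    assume "x = y \<and> Rt L x = Ut L y"
    then have "snd x = (snd x + 1) mod L" unfolding Rt_def Ut_def by auto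
    then show False using mod_step_ne fx assms by force
  next
    assume a: "x = Ut L y \<and> Rt L x = y"
    then have "fst (Rt L x) = fst y" "fst x = fst y" unfolding Ut_def by auto
    then have "fst y = (fst y + 1) mod L" unfolding Rt_def by auto
    then show False using mod_step_ne fy assms by force
  qed
qed

lemma sum_edges: assumes "3 \<le> L"
  shows "(\<Sum>e\<in>nn_edges L. F e) = (\<Sum>x\<in>torus L. F {x, Rt L x}) + (\<Sum>x\<in>torus L. F {x, Ut L x})"
proof -
  have "(\<Sum>e\<in>nn_edges L. F e) = (\<Sum>e\<in>(\<lambda>x. {x, Rt L x}) ` torus L. F e) + (\<Sum>e\<in>(\<lambda>x. {x, Ut L x}) ` torus L. F e)"
    unfolding edges_eq by (rule sum.union_disjoint) (use finite_torus disj_RU[OF assms] in auto)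
  also have "\<dots> = (\<Sum>x\<in>torus L. F {x, Rt L x}) + (\<Sum>x\<in>torus L. F {x, Ut L x})"
    unfolding sum.reindex[OF inj_R[OF assms]] sum.reindex[OF inj_U[OF assms]] comp_def ..
  finally show ?thesis .
qed

lemma w_pair: "x \<noteq> y \<Longrightarrow> (\<Sum>a\<in>{x,y}. \<Sum>b\<in>{x,y}. real_of_int ((\<tau> b - \<tau> a)^2)) / 2 = real_of_int ((\<tau> y - \<tau> x)^2)"
  by (simp add: power2_commute)

definition dd :: "int \<Rightarrow> int \<Rightarrow> int" where
  "dd u v = (v - u)^2 - (min v 0 - min u 0)^2"

lemma dd_nonneg: "u \<in> {-1,0,1} \<Longrightarrow> v \<in> {-1,0,1} \<Longrightarrow> 0 \<le> dd u v"
  unfolding dd_def by auto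
lemma dd_one: "u \<in> {-1,0,1} \<Longrightarrow> v \<in> {-1,0,1} \<Longrightarrow> (u = 1) \<noteq> (v = 1) \<Longrightarrow> 1 \<le> dd u v"
  unfolding dd_def by auto


lemma line_exists:
  fixes f :: "nat \<Rightarrow> bool"
  assumes "a0 < L" "f a0" "b0 < L" "\<not> f b0"
  shows "\<exists>a<L. f a \<and> \<not> f ((a+1) mod L)"
proof (rule ccontr)
  assume "\<not> ?thesis"
  hence step: "\<forall>a<L. f a \<longrightarrow> f ((a+1) mod L)" by blast
  have L0: "0 < L" using assms by auto
  have "f ((a0 + k) mod L)" for k
  proof (induction k)
    case 0 then show ?case using assms by simp
  next
    case (Suc k)
    have "(a0 + Suc k) mod L = ((a0 + k) mod L + 1) mod L" by (simp add: mod_simps)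
    then show ?case using step Suc L0 by simp
  qed
  from this[of "b0 + L - a0"] have "f ((b0 + L) mod L)" using assms by simp
  then show False using assms by simp
qed

lemma line_two:
  fixes f :: "nat \<Rightarrow> bool" and g :: "nat \<Rightarrow> real"
  assumes nn: "\<forall>a<L. 0 \<le> g a"
    and bd: "\<forall>a<L. f a \<noteq> f ((a+1) mod L) \<longrightarrow> 1 \<le> g a"
    and e1: "\<exists>a<L. f a" and e2: "\<exists>a<L. \<not> f a"
  shows "2 \<le> (\<Sum>a\<in>{0..<L}. g a)"
proof -
  obtain a0 b0 where "a0 < L" "f a0" "b0 < L" "\<not> f b0" using e1 e2 by blast
  obtain a1 where a1: "a1 < L" "f a1" "\<not> f ((a1+1) mod L)"
    using line_exists[OF \<open>a0 < L\<close> \<open>f a0\<close> \<open>b0 < L\<close> \<open>\<not> f b0\<close>] by blast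
  obtain a2 where a2: "a2 < L" "\<not> f a2" "f ((a2+1) mod L)"
    using line_exists[of b0 L "\<lambda>a. \<not> f a" a0] \<open>a0 < L\<close> \<open>f a0\<close> \<open>b0 < L\<close> \<open>\<not> f b0\<close> by auto
  have ne: "a1 \<noteq> a2" using a1 a2 by auto
  have "1 \<le> g a1" using bd a1 by blast
  moreover have "1 \<le> g a2" using bd a2 by blast
  ultimately have "2 \<le> g a1 + g a2" by simp
  also have "\<dots> = (\<Sum>a\<in>{a1,a2}. g a)" using ne by simp
  also have "\<dots> \<le> (\<Sum>a\<in>{0..<L}. g a)"
    by (rule sum_mono2) (use nn a1 a2 in auto)
  finally show ?thesis .
qed

lemma arith_final:
  fixes h :: real and p r c n0 :: nat
  assumes "0 < h" "h < 1" "real n0 \<le> 2 / h" "p \<le> n0 * (n0 + 1) + 1" "p \<le> r * c"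
  shows "h * real p \<le> 2 * (real r + real c)"
proof -
  have a: "h * real n0 \<le> 2" using assms(1,3) by (simp add: pos_le_divide_eq mult.commute)
  have "real p \<le> real (n0 * (n0 + 1) + 1)" using assms(4) by linarith
  also have "\<dots> \<le> (real n0 + 1)^2" by (simp add: power2_eq_square algebra_simps)
  finally have b: "real p \<le> (real n0 + 1)^2" .
  have hn: "0 \<le> h * real n0 + h" "h * real n0 + h \<le> 3" using a assms(1,2) by auto
  have "h^2 * real p \<le> h^2 * (real n0 + 1)^2" using b by (simp add: mult_left_mono)
  also have "\<dots> = (h * real n0 + h)^2" by (simp add: power2_eq_square algebra_simps)
  also have "\<dots> \<le> 3^2" by (rule power_mono) (use hn in auto)
  finally have c: "h^2 * real p \<le> 9" by simp
  have "(h * real p)^2 = (h^2 * real p) * real p" by (simp add: power2_eq_square)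
  also have "\<dots> \<le> 9 * real p" using c by (simp add: mult_right_mono)
  also have "\<dots> \<le> 16 * real p" by simp
  also have "\<dots> \<le> 16 * (real r * real c)" using assms(5)
    by (metis of_nat_le_iff of_nat_mult mult_left_mono zero_le_numeral)
  also have "\<dots> \<le> (2 * (real r + real c))^2"
    using sum_squares_ge_zero[of "real r - real c" 0] 
    by (simp add: power2_eq_square algebra_simps)
  finally show ?thesis by (rule power2_le_imp_le) simp
qed


lemma E_eq:
  assumes "3 \<le> L"
  shows "(\<Sum>e\<in>nn_edges L. (\<Sum>x\<in>e. \<Sum>y\<in>e. real_of_int ((\<tau> y - \<tau> x)^2)) / 2)
    = (\<Sum>x\<in>torus L. real_of_int ((\<tau> (Rt L x) - \<tau> x)^2) + real_of_int ((\<tau> (Ut L x) - \<tau> x)^2))"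
  unfolding sum_edges[OF assms] sum.distrib
proof (intro arg_cong2[where f="(+)"] sum.cong refl)
  fix x assume x: "x \<in> torus L"
  have "x \<noteq> Rt L x" using Rt_ne[OF x] assms by auto
  then show "(\<Sum>a\<in>{x, Rt L x}. \<Sum>b\<in>{x, Rt L x}. real_of_int ((\<tau> b - \<tau> a)^2)) / 2 = real_of_int ((\<tau> (Rt L x) - \<tau> x)^2)"
    by (rule w_pair)
next
  fix x assume x: "x \<in> torus L"
  have "x \<noteq> Ut L x" using Ut_ne[OF x] assms by auto
  then show "(\<Sum>a\<in>{x, Ut L x}. \<Sum>b\<in>{x, Ut L x}. real_of_int ((\<tau> b - \<tau> a)^2)) / 2 = real_of_int ((\<tau> (Ut L x) - \<tau> x)^2)"
    by (rule w_pair)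
qed

theorem mainTheorem20:
  fixes h :: real and L :: nat and \<sigma> :: "(nat \<times> nat) \<Rightarrow> int"
  assumes "0 < h" "h < 1"
    and "2 / h \<notin> \<int>"
    and "L \<ge> nat \<lfloor>2 / h\<rfloor> * (nat \<lfloor>2 / h\<rfloor> + 1) + 2"
    and "\<sigma> \<in> Omega L"
    and "Ncount L \<sigma> \<le> nat \<lfloor>2 / h\<rfloor> * (nat \<lfloor>2 / h\<rfloor> + 1) + 1"
  shows "H L h (\<lambda>x. min (\<sigma> x) 0) \<le> H L h \<sigma>"
proof -
  define n0 where "n0 = nat \<lfloor>2 / h\<rfloor>"
  define M where "M = n0 * (n0 + 1) + 1"
  have h2: "2 < 2 / h" using assms(1,2) by (simp add: less_divide_eq)
  have fl: "2 \<le> \<lfloor>2 / h\<rfloor>" using h2 by (simp add: le_floor_iff)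
  hence n02: "2 \<le> n0" unfolding n0_def by linarith
  have LM: "M < L" using assms(4) unfolding M_def n0_def by linarith
  have "2 * 3 \<le> n0 * (n0 + 1)" using n02 by (intro mult_le_mono) auto
  hence L3: "3 \<le> L" using LM unfolding M_def by linarith
  have n0le: "real n0 \<le> 2 / h" unfolding n0_def using fl by linarith
  have sv: "\<forall>x\<in>torus L. \<sigma> x \<in> {-1,0,1}" using assms(5) unfolding Omega_def by auto
  define Pl where "Pl = {x\<in>torus L. \<sigma> x = 1}"
  have finPl: "finite Pl" unfolding Pl_def using finite_torus by auto
  have "Pl \<subseteq> {x \<in> torus L. \<sigma> x \<noteq> -1}" unfolding Pl_def by auto
  hence "card Pl \<le> Ncount L \<sigma>" unfolding Ncount_def by (rule card_mono[rotated]) (use finite_torus in auto)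
  hence PlM: "card Pl \<le> M" using assms(6) unfolding M_def n0_def by linarith
  have nfa: "\<exists>a<L. \<sigma> (a,b) \<noteq> 1" if b: "b < L" for b
  proof (rule ccontr)
    assume "\<not> ?thesis"
    hence "(\<lambda>a. (a,b)) ` {0..<L} \<subseteq> Pl" unfolding Pl_def torus_def using b by auto
    hence "card ((\<lambda>a. (a,b)) ` {0..<L}) \<le> card Pl" by (rule card_mono[OF finPl])
    moreover have "card ((\<lambda>a. (a,b)) ` {0..<L}) = L" by (subst card_image) (auto simp: inj_on_def)
    ultimately show False using PlM LM by linarith
  qed
  have nfb: "\<exists>b<L. \<sigma> (a,b) \<noteq> 1" if a: "a < L" for a
  proof (rule ccontr)
    assume "\<not> ?thesis"
    hence "(\<lambda>b. (a,b)) ` {0..<L} \<subseteq> Pl" unfolding Pl_def torus_def using a by auto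
    hence "card ((\<lambda>b. (a,b)) ` {0..<L}) \<le> card Pl" by (rule card_mono[OF finPl])
    moreover have "card ((\<lambda>b. (a,b)) ` {0..<L}) = L" by (subst card_image) (auto simp: inj_on_def)
    ultimately show False using PlM LM by linarith
  qed
  define A where "A = {0..<L} \<inter> {a. \<exists>b<L. \<sigma> (a,b) = 1}"
  define B where "B = {0..<L} \<inter> {b. \<exists>a<L. \<sigma> (a,b) = 1}"
  have "Pl \<subseteq> A \<times> B" unfolding Pl_def A_def B_def torus_def by auto
  hence "card Pl \<le> card (A \<times> B)" by (rule card_mono[rotated]) (auto simp: A_def B_def)
  hence PlAB: "card Pl \<le> card A * card B" by (simp add: card_cartesian_product)
  define gR where "gR x = real_of_int (dd (\<sigma> x) (\<sigma> (Rt L x)))" for x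
  define gU where "gU x = real_of_int (dd (\<sigma> x) (\<sigma> (Ut L x)))" for x
  have SR: "2 * real (card B) \<le> (\<Sum>x\<in>torus L. gR x)"
  proof -
    have eq: "(\<Sum>x\<in>torus L. gR x) = (\<Sum>b\<in>{0..<L}. \<Sum>a\<in>{0..<L}. gR (a,b))"
      unfolding torus_def sum.cartesian_product' by (rule sum.swap)
    have le: "2 * of_bool (b \<in> B) \<le> (\<Sum>a\<in>{0..<L}. gR (a,b))" if b: "b \<in> {0..<L}" for b
    proof -
      have nn: "\<forall>a<L. 0 \<le> gR (a,b)"
        using sv b dd_nonneg Rt_in unfolding gR_def torus_def by (auto simp: Rt_def)
      show ?thesis
      proof (cases "b \<in> B")
        case True
        have "2 \<le> (\<Sum>a\<in>{0..<L}. gR (a,b))"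
        proof (rule line_two[where f="\<lambda>a. \<sigma> (a,b) = 1"])
          show "\<forall>a<L. 0 \<le> gR (a,b)" by (rule nn)
          show "\<forall>a<L. (\<sigma> (a,b) = 1) \<noteq> (\<sigma> ((a+1) mod L, b) = 1) \<longrightarrow> 1 \<le> gR (a,b)"
          proof (intro allI impI)
            fix a assume a: "a < L" and ne: "(\<sigma> (a,b) = 1) \<noteq> (\<sigma> ((a+1) mod L, b) = 1)"
            have "(a,b) \<in> torus L" "((a+1) mod L, b) \<in> torus L" using a b L3 unfolding torus_def by auto
            then have v: "\<sigma> (a,b) \<in> {-1,0,1}" "\<sigma> ((a+1) mod L, b) \<in> {-1,0,1}" using sv by blast+
            show "1 \<le> gR (a,b)" unfolding gR_def Rt_def using dd_one[OF v ne] by simp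
          qed
          show "\<exists>a<L. \<sigma> (a,b) = 1" using True unfolding B_def by auto
          show "\<exists>a<L. \<sigma> (a,b) \<noteq> 1" using nfa b by auto
        qed
        then show ?thesis using True by simp
      next
        case False
        then show ?thesis using nn by (simp, intro sum_nonneg) auto
      qed
    qed
    have "2 * real (card B) = (\<Sum>b\<in>{0..<L}. 2 * of_bool (b \<in> B))"
    proof -
      have "{0..<L} \<inter> {b. b \<in> B} = B" unfolding B_def by auto
      then show ?thesis by (simp add: sum_distrib_left[symmetric])
    qed
    also have "\<dots> \<le> (\<Sum>b\<in>{0..<L}. \<Sum>a\<in>{0..<L}. gR (a,b))" by (rule sum_mono) (rule le)
    finally show ?thesis using eq by simp
  qed
  have SU: "2 * real (card A) \<le> (\<Sum>x\<in>torus L. gU x)"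
  proof -
    have eq: "(\<Sum>x\<in>torus L. gU x) = (\<Sum>a\<in>{0..<L}. \<Sum>b\<in>{0..<L}. gU (a,b))"
      unfolding torus_def sum.cartesian_product' ..
    have le: "2 * of_bool (a \<in> A) \<le> (\<Sum>b\<in>{0..<L}. gU (a,b))" if a: "a \<in> {0..<L}" for a
    proof -
      have nn: "\<forall>b<L. 0 \<le> gU (a,b)"
        using sv a dd_nonneg Ut_in unfolding gU_def torus_def by (auto simp: Ut_def)
      show ?thesis
      proof (cases "a \<in> A")
        case True
        have "2 \<le> (\<Sum>b\<in>{0..<L}. gU (a,b))"
        proof (rule line_two[where f="\<lambda>b. \<sigma> (a,b) = 1"])
          show "\<forall>b<L. 0 \<le> gU (a,b)" by (rule nn)
          show "\<forall>b<L. (\<sigma> (a,b) = 1) \<noteq> (\<sigma> (a, (b+1) mod L) = 1) \<longrightarrow> 1 \<le> gU (a,b)"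
          proof (intro allI impI)
            fix b assume b: "b < L" and ne: "(\<sigma> (a,b) = 1) \<noteq> (\<sigma> (a, (b+1) mod L) = 1)"
            have "(a,b) \<in> torus L" "(a, (b+1) mod L) \<in> torus L" using a b L3 unfolding torus_def by auto
            then have v: "\<sigma> (a,b) \<in> {-1,0,1}" "\<sigma> (a, (b+1) mod L) \<in> {-1,0,1}" using sv by blast+
            show "1 \<le> gU (a,b)" unfolding gU_def Ut_def using dd_one[OF v ne] by simp
          qed
          show "\<exists>b<L. \<sigma> (a,b) = 1" using True unfolding A_def by auto
          show "\<exists>b<L. \<sigma> (a,b) \<noteq> 1" using nfb a by auto
        qed
        then show ?thesis using True by simp
      next
        case False
        then show ?thesis using nn by (simp, intro sum_nonneg) auto
      qed
    qed
    have "2 * real (card A) = (\<Sum>a\<in>{0..<L}. 2 * of_bool (a \<in> A))"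
    proof -
      have "{0..<L} \<inter> {a. a \<in> A} = A" unfolding A_def by auto
      then show ?thesis by (simp add: sum_distrib_left[symmetric])
    qed
    also have "\<dots> \<le> (\<Sum>a\<in>{0..<L}. \<Sum>b\<in>{0..<L}. gU (a,b))" by (rule sum_mono) (rule le)
    finally show ?thesis using eq by simp
  qed
  define \<tau> where "\<tau> x = min (\<sigma> x) 0" for x
  have Ediff: "(\<Sum>x\<in>torus L. real_of_int ((\<sigma> (Rt L x) - \<sigma> x)^2) + real_of_int ((\<sigma> (Ut L x) - \<sigma> x)^2))
     - (\<Sum>x\<in>torus L. real_of_int ((\<tau> (Rt L x) - \<tau> x)^2) + real_of_int ((\<tau> (Ut L x) - \<tau> x)^2))
     = (\<Sum>x\<in>torus L. gR x + gU x)"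
    unfolding sum_subtractf[symmetric] by (rule sum.cong) (auto simp: gR_def gU_def dd_def \<tau>_def)
  have Mdiff: "(\<Sum>x\<in>torus L. real_of_int (\<sigma> x)) - (\<Sum>x\<in>torus L. real_of_int (\<tau> x)) = real (card Pl)"
  proof -
    have "(\<Sum>x\<in>torus L. real_of_int (\<sigma> x)) - (\<Sum>x\<in>torus L. real_of_int (\<tau> x))
        = (\<Sum>x\<in>torus L. of_bool (\<sigma> x = 1))"
      unfolding sum_subtractf[symmetric] by (rule sum.cong) (use sv in \<open>auto simp: \<tau>_def\<close>)
    also have "\<dots> = real (card (torus L \<inter> {x. \<sigma> x = 1}))" using finite_torus by simp
    also have "torus L \<inter> {x. \<sigma> x = 1} = Pl" unfolding Pl_def by auto
    finally show ?thesis .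
  qed
  have key: "h * real (card Pl) \<le> 2 * (real (card A) + real (card B))"
    by (rule arith_final[OF assms(1,2) n0le PlM[unfolded M_def] PlAB])
  have "H L h \<sigma> - H L h \<tau> = (\<Sum>x\<in>torus L. gR x + gU x) - h * real (card Pl)"
    unfolding H_def E_eq[OF L3] using Ediff Mdiff by (simp add: algebra_simps)
  also have "\<dots> \<ge> 0" using SR SU key by (simp add: sum.distrib)
  finally have "H L h \<tau> \<le> H L h \<sigma>" by simp
  then show ?thesis unfolding \<tau>_def .
qed

end
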